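(* Let $(\Omega,\mathcal F,\mathbb P)$ be a probability space with a left-continuous filtration $(\mathcal F(t))_{t\ge0}$, and let $T>0$. Let $(B(t))_{0\le t\le T}$ and $(C(t))_{0\le t\le T}$ be adapted continuous processes, with $B\ge0$ and $C$ uniformly bounded, and suppose $\mathbb E[\int_0^TB(u)\,\mathrm du]<\infty$. Set $A(t):=\int_0^t(B(u)+C(u))\,\mathrm du$. Let $t_0\in[0,T]$ be such that $$\lim_{t\to t_0}\mathbb E\Big[\frac{A(t)-A(t_0)}{t-t_0}\Big]=\mathbb E[B(t_0)+C(t_0)].$$ Then $$\lim_{t\uparrow t_0}\frac{\mathbb E[A(t_0)-A(t)\,|\,\mathcal F(t)]}{t_0-t}=\lim_{t\downarrow t_0}\frac{\mathbb E[A(t)-A(t_0)\,|\,\mathcal F(t_0)]}{t-t_0}=B(t_0)+C(t_0),$$ where both limits exist in $L^1(\mathbb P)$.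
   Context: A filtration is left-continuous if $\mathcal F(t)=\sigma\big(\bigcup_{u<t}\mathcal F(u)\big)$ for all $t>0$. The hypothesis on $t_0$ holds for Lebesgue-almost every $t_0\in[0,T]$. *)

theory Defs
  imports "HOL-Probability.Probability"
begin

definition intproc :: "(real \<Rightarrow> 'a \<Rightarrow> real) \<Rightarrow> (real \<Rightarrow> 'a \<Rightarrow> real) \<Rightarrow> real \<Rightarrow> 'a \<Rightarrow> real" where
  "intproc B C t \<omega> = (LINT u:{0..t}|lborel. B u \<omega> + C u \<omega>)"

text \<open>Convergence in L^1(M) of X(t) to Y along the filter G (norm measured by the
  nonnegative integral, so that it is meaningful also for non-integrable X(t)).\<close>
definition L1_tendsto :: "'a measure \<Rightarrow> (real \<Rightarrow> 'a \<Rightarrow> real) \<Rightarrow> ('a \<Rightarrow> real) \<Rightarrow> real filter \<Rightarrow> bool" where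
  "L1_tendsto M X Y G \<longleftrightarrow>
     (\<forall>\<^sub>F t in G. integrable M (X t)) \<and> integrable M Y \<and>
     ((\<lambda>t. \<integral>\<^sup>+ \<omega>. ennreal \<bar>X t \<omega> - Y \<omega>\<bar> \<partial>M) \<longlongrightarrow> 0) G"

end

theory Submission
  imports Defs
begin

lemma floor_div_tendsto:
  fixes x :: real
  shows "(\<lambda>n. real_of_int \<lfloor>real (Suc n) * x\<rfloor> / real (Suc n)) \<longlonglongrightarrow> x"
proof (rule tendsto_sandwich[of "\<lambda>n. x - 1 / real (Suc n)" _ _ "\<lambda>n. x"])
  show "\<forall>\<^sub>F n in sequentially. x - 1 / real (Suc n) \<le> real_of_int \<lfloor>real (Suc n) * x\<rfloor> / real (Suc n)"
  proof (intro always_eventually allI)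
    fix n
    have "real (Suc n) * x - 1 \<le> real_of_int \<lfloor>real (Suc n) * x\<rfloor>" by linarith
    then have "(real (Suc n) * x - 1) / real (Suc n) \<le> real_of_int \<lfloor>real (Suc n) * x\<rfloor> / real (Suc n)"
      by (rule divide_right_mono) simp
    moreover have "(real (Suc n) * x - 1) / real (Suc n) = x - 1 / real (Suc n)"
      by (simp add: field_simps)
    ultimately show "x - 1 / real (Suc n) \<le> real_of_int \<lfloor>real (Suc n) * x\<rfloor> / real (Suc n)"
      by simp
  qed
  show "\<forall>\<^sub>F n in sequentially. real_of_int \<lfloor>real (Suc n) * x\<rfloor> / real (Suc n) \<le> x"
  proof (intro always_eventually allI)
    fix n
    have "real_of_int \<lfloor>real (Suc n) * x\<rfloor> \<le> real (Suc n) * x" by linarith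
    then show "real_of_int \<lfloor>real (Suc n) * x\<rfloor> / real (Suc n) \<le> x"
      by (simp add: field_simps)
  qed
  have "(\<lambda>n. 1 / real (Suc n)) \<longlonglongrightarrow> 0" by (rule LIMSEQ_Suc[OF lim_const_over_n])
  then show "(\<lambda>n. x - 1 / real (Suc n)) \<longlonglongrightarrow> x" using tendsto_diff[of "\<lambda>_. x" x] by fastforce
qed simp

lemma jmeas:
  fixes X :: "real \<Rightarrow> 'a \<Rightarrow> real" and N :: "'a measure" and s :: real
  assumes s: "0 \<le> s" and meas: "\<And>t. t \<in> {0..s} \<Longrightarrow> X t \<in> borel_measurable N"
   and cont: "\<And>\<omega>. \<omega> \<in> space N \<Longrightarrow> continuous_on {0..s} (\<lambda>t. X t \<omega>)"
  shows "(\<lambda>p. X (max 0 (min s (snd p))) (fst p)) \<in> borel_measurable (N \<Otimes>\<^sub>M lborel)"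
proof -
  define c where "c u = max 0 (min s u)" for u :: real
  have c_in: "c u \<in> {0..s}" for u using s by (auto simp: c_def)
  define g where "g n p = X (c (real_of_int \<lfloor>real (Suc n) * c (snd p)\<rfloor> / real (Suc n))) (fst p)"
    for n :: nat and p :: "'a \<times> real"
  show ?thesis unfolding c_def[symmetric]
  proof (rule borel_measurable_LIMSEQ_real[where u = g])
    fix n
    have "(\<lambda>p. (\<lambda>i::int. \<lambda>p. X (c (real_of_int i / real (Suc n))) (fst p)) (\<lfloor>real (Suc n) * c (snd p)\<rfloor>) p)
        \<in> borel_measurable (N \<Otimes>\<^sub>M lborel)"
    proof (rule measurable_compose_countable[where f="\<lambda>i::int. \<lambda>p. X (c (real_of_int i / real (Suc n))) (fst p)" and g="\<lambda>p. \<lfloor>real (Suc n) * c (snd p)\<rfloor>"])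
      fix i :: int
      show "(\<lambda>p. X (c (real_of_int i / real (Suc n))) (fst p)) \<in> borel_measurable (N \<Otimes>\<^sub>M lborel)"
        by (rule measurable_compose[OF measurable_fst]) (rule meas[OF c_in])
    next
      show "(\<lambda>p. \<lfloor>real (Suc n) * c (snd p)\<rfloor>) \<in> N \<Otimes>\<^sub>M lborel \<rightarrow>\<^sub>M count_space UNIV"
        unfolding c_def by measurable
    qed
    then show "g n \<in> borel_measurable (N \<Otimes>\<^sub>M lborel)" unfolding g_def by simp
  next
    fix p :: "'a \<times> real" assume p: "p \<in> space (N \<Otimes>\<^sub>M lborel)"
    then have "fst p \<in> space N" by (auto simp: space_pair_measure)
    have cc: "continuous_on UNIV c" unfolding c_def by (intro continuous_intros)
    have "(\<lambda>n. c (real_of_int \<lfloor>real (Suc n) * c (snd p)\<rfloor> / real (Suc n))) \<longlonglongrightarrow> c (c (snd p))"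
      by (rule continuous_on_tendsto_compose[OF cc floor_div_tendsto]) auto
    moreover have "c (c u) = c u" for u unfolding c_def using s by auto
    ultimately have "(\<lambda>n. c (real_of_int \<lfloor>real (Suc n) * c (snd p)\<rfloor> / real (Suc n))) \<longlonglongrightarrow> c (snd p)"
      by simp
    then show "(\<lambda>n. g n p) \<longlonglongrightarrow> X (c (snd p)) (fst p)"
      unfolding g_def
      by (rule continuous_on_tendsto_compose[OF cont[OF \<open>fst p \<in> space N\<close>]]) (use c_in in \<open>auto intro!: always_eventually\<close>)
  qed
qed


lemma lint_meas:
  fixes X :: "real \<Rightarrow> 'a \<Rightarrow> real" and N :: "'a measure" and s t :: real
  assumes s: "0 \<le> s" and ts: "t \<le> s" and meas: "\<And>u. u \<in> {0..s} \<Longrightarrow> X u \<in> borel_measurable N"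
   and cont: "\<And>\<omega>. \<omega> \<in> space N \<Longrightarrow> continuous_on {0..s} (\<lambda>u. X u \<omega>)"
  shows "(\<lambda>\<omega>. LINT u:{0..t}|lborel. X u \<omega>) \<in> borel_measurable N"
proof -
  define c where "c u = max 0 (min s u)" for u :: real
  have jm: "(\<lambda>p. X (c (snd p)) (fst p)) \<in> borel_measurable (N \<Otimes>\<^sub>M lborel)"
    unfolding c_def by (rule jmeas[OF s meas cont])
  have eq: "(LINT u:{0..t}|lborel. X u \<omega>) = (\<integral>u. indicator {0..t} u * X (c u) \<omega> \<partial>lborel)" for \<omega>
    unfolding set_lebesgue_integral_def
    apply (rule Bochner_Integration.integral_cong) using ts
    by (auto simp: indicator_def c_def max_def min_def) (metis dual_order.antisym dual_order.trans)
  have "(\<lambda>\<omega>. \<integral>u. indicator {0..t} u * X (c u) \<omega> \<partial>lborel) \<in> borel_measurable N"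
  proof (rule sigma_finite_measure.borel_measurable_lebesgue_integral)
    show "sigma_finite_measure (lborel :: real measure)" by (rule lborel.sigma_finite_measure_axioms)
    have "(\<lambda>p. indicator {0..t} (snd p) * X (c (snd p)) (fst p)) \<in> borel_measurable (N \<Otimes>\<^sub>M lborel)"
      using jm by measurable
    then show "(\<lambda>(x, y). indicator {0..t} y * X (c y) x) \<in> borel_measurable (N \<Otimes>\<^sub>M lborel)"
      by (simp add: case_prod_beta')
  qed
  then show ?thesis unfolding eq .
qed

lemma lint_eq_integral:
  fixes f :: "real \<Rightarrow> real"
  assumes "continuous_on {0..T} f" "t \<in> {0..T}"
  shows "(LINT u:{0..t}|lborel. f u) = integral {0..t} f" "f integrable_on {0..t}"
proof -
  have "continuous_on {0..t} f" using assms by (auto intro: continuous_on_subset)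
  then have "set_integrable lborel {0..t} f" by (rule borel_integrable_atLeastAtMost')
  then show "(LINT u:{0..t}|lborel. f u) = integral {0..t} f" "f integrable_on {0..t}"
    using set_borel_integral_eq_integral by auto
qed

context sigma_finite_subalgebra
begin
lemma cexp_contr:
  assumes [measurable]: "f \<in> borel_measurable M"
  shows "(\<integral>\<^sup>+x. ennreal \<bar>real_cond_exp M F f x\<bar> \<partial>M) \<le> (\<integral>\<^sup>+x. ennreal \<bar>f x\<bar> \<partial>M)"
proof -
  have "(\<integral>\<^sup>+x. ennreal \<bar>real_cond_exp M F f x\<bar> \<partial>M) \<le> (\<integral>\<^sup>+x. nn_cond_exp M F (\<lambda>x. ennreal \<bar>f x\<bar>) x \<partial>M)"
    by (rule nn_integral_mono_AE) (use real_cond_exp_abs[OF assms] in auto)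
  also have "\<dots> = (\<integral>\<^sup>+x. (\<lambda>_. 1) x * nn_cond_exp M F (\<lambda>x. ennreal \<bar>f x\<bar>) x \<partial>M)" by simp
  also have "\<dots> = (\<integral>\<^sup>+x. (\<lambda>_. 1) x * ennreal \<bar>f x\<bar> \<partial>M)"
    by (rule nn_cond_exp_intg) auto
  finally show ?thesis by simp
qed
end


lemma fatou_int:
  fixes G :: "nat \<Rightarrow> 'a \<Rightarrow> real"
  assumes Gi: "\<And>n. integrable M (G n)" and Gp: "\<And>n x. x \<in> space M \<Longrightarrow> 0 \<le> G n x"
    and gm: "g \<in> borel_measurable M" and gp: "\<And>x. x \<in> space M \<Longrightarrow> 0 \<le> g x"
    and lim: "\<And>x. x \<in> space M \<Longrightarrow> (\<lambda>n. G n x) \<longlonglongrightarrow> g x"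
    and ilim: "(\<lambda>n. \<integral>x. G n x \<partial>M) \<longlonglongrightarrow> c"
  shows "integrable M g"
proof (rule integrableI_nonneg[OF gm])
  show "AE x in M. 0 \<le> g x" using gp by auto
  have [measurable]: "\<And>n. G n \<in> borel_measurable M" using Gi by auto
  have "(\<integral>\<^sup>+x. ennreal (g x) \<partial>M) = (\<integral>\<^sup>+x. liminf (\<lambda>n. ennreal (G n x)) \<partial>M)"
  proof (rule nn_integral_cong)
    fix x assume "x \<in> space M"
    then have "(\<lambda>n. ennreal (G n x)) \<longlonglongrightarrow> ennreal (g x)" using lim by (intro tendsto_ennrealI) auto
    then show "ennreal (g x) = liminf (\<lambda>n. ennreal (G n x))"
      by (simp add: lim_imp_Liminf)
  qed
  also have "\<dots> \<le> liminf (\<lambda>n. \<integral>\<^sup>+x. ennreal (G n x) \<partial>M)"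
    by (rule nn_integral_liminf) auto
  also have "(\<lambda>n. \<integral>\<^sup>+x. ennreal (G n x) \<partial>M) = (\<lambda>n. ennreal (\<integral>x. G n x \<partial>M))"
    using Gi Gp by (intro ext nn_integral_eq_integral) auto
  also have "liminf (\<lambda>n. ennreal (\<integral>x. G n x \<partial>M)) = ennreal c"
    using ilim by (intro lim_imp_Liminf tendsto_ennrealI) auto
  finally show "(\<integral>\<^sup>+x. ennreal (g x) \<partial>M) < \<infinity>"
    by (simp add: order_le_less_trans)
qed

lemma scheffe_int:
  fixes G :: "nat \<Rightarrow> 'a \<Rightarrow> real"
  assumes Gi: "\<And>n. integrable M (G n)" and Gp: "\<And>n x. x \<in> space M \<Longrightarrow> 0 \<le> G n x"
    and gi: "integrable M g" and gp: "\<And>x. x \<in> space M \<Longrightarrow> 0 \<le> g x"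
    and lim: "\<And>x. x \<in> space M \<Longrightarrow> (\<lambda>n. G n x) \<longlonglongrightarrow> g x"
    and ilim: "(\<lambda>n. \<integral>x. G n x \<partial>M) \<longlonglongrightarrow> (\<integral>x. g x \<partial>M)"
  shows "(\<lambda>n. \<integral>\<^sup>+x. ennreal \<bar>G n x - g x\<bar> \<partial>M) \<longlonglongrightarrow> 0"
proof -
  have "(\<lambda>n. \<integral>\<^sup>+x. norm (G n x - g x) \<partial>M) \<longlonglongrightarrow> 0"
  proof (rule Scheffe_lemma1[OF Gi gi])
    show "AE x in M. (\<lambda>n. G n x) \<longlonglongrightarrow> g x" using lim by auto
    have e1: "(\<lambda>n. \<integral>\<^sup>+x. norm (G n x) \<partial>M) = (\<lambda>n. ennreal (\<integral>x. G n x \<partial>M))"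
    proof (intro ext)
      fix n
      have "(\<integral>\<^sup>+x. norm (G n x) \<partial>M) = (\<integral>\<^sup>+x. ennreal (G n x) \<partial>M)"
        by (rule nn_integral_cong) (use Gp in auto)
      also have "\<dots> = ennreal (\<integral>x. G n x \<partial>M)"
        using Gi Gp by (intro nn_integral_eq_integral) auto
      finally show "(\<integral>\<^sup>+x. norm (G n x) \<partial>M) = ennreal (\<integral>x. G n x \<partial>M)" .
    qed
    have e2: "(\<integral>\<^sup>+x. norm (g x) \<partial>M) = ennreal (\<integral>x. g x \<partial>M)"
    proof -
      have "(\<integral>\<^sup>+x. norm (g x) \<partial>M) = (\<integral>\<^sup>+x. ennreal (g x) \<partial>M)"
        by (rule nn_integral_cong) (use gp in auto)
      also have "\<dots> = ennreal (\<integral>x. g x \<partial>M)"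
        using gi gp by (intro nn_integral_eq_integral) auto
      finally show ?thesis .
    qed
    have "limsup (\<lambda>n. ennreal (\<integral>x. G n x \<partial>M)) = ennreal (\<integral>x. g x \<partial>M)"
      using ilim by (intro lim_imp_Limsup tendsto_ennrealI) auto
    then show "limsup (\<lambda>n. \<integral>\<^sup>+x. norm (G n x) \<partial>M) \<le> (\<integral>\<^sup>+x. norm (g x) \<partial>M)"
      unfolding e1 e2 by simp
  qed
  then show ?thesis by simp
qed


lemma swap_div: "((a::real) - b) / (c - d) = (b - a) / (d - c)"
  by (metis minus_diff_eq minus_divide_divide)

lemma abs_aux: "\<bar>(q::real) - (2 * q' - q)\<bar> + \<bar>(2 * q' - q) - y\<bar> \<le> 3 * \<bar>q - y\<bar> + 4 * \<bar>q' - y\<bar>"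
  by (simp add: abs_if)

lemma ennreal_aux:
  assumes "\<bar>a::real\<bar> + \<bar>b\<bar> \<le> 3 * \<bar>c\<bar> + 4 * \<bar>d\<bar>"
  shows "ennreal \<bar>a\<bar> + ennreal \<bar>b\<bar> \<le> 3 * ennreal \<bar>c\<bar> + 4 * ennreal \<bar>d\<bar>"
proof -
  have "ennreal \<bar>a\<bar> + ennreal \<bar>b\<bar> = ennreal (\<bar>a\<bar> + \<bar>b\<bar>)" by (simp add: ennreal_plus)
  also have "\<dots> \<le> ennreal (3 * \<bar>c\<bar> + 4 * \<bar>d\<bar>)" using assms by (rule ennreal_leI)
  also have "\<dots> = 3 * ennreal \<bar>c\<bar> + 4 * ennreal \<bar>d\<bar>"
    by (simp add: ennreal_plus ennreal_mult)
  finally show ?thesis .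
qed

lemma two_div: "2 * ((x::real) / (2 * h)) = x / h"
  by (cases "h = 0") (simp_all add: field_simps)

theorem propositionD2:
  fixes M :: "'a measure" and F :: "real \<Rightarrow> 'a measure"
    and B C :: "real \<Rightarrow> 'a \<Rightarrow> real" and T t0 :: real
  assumes prob: "prob_space M"
    and filt_sub: "\<And>t. 0 \<le> t \<Longrightarrow> subalgebra M (F t)"
    and filt_mono: "\<And>s t. 0 \<le> s \<Longrightarrow> s \<le> t \<Longrightarrow> sets (F s) \<subseteq> sets (F t)"
    and filt_leftcont: "\<And>t. 0 < t \<Longrightarrow>
           sets (F t) = sigma_sets (space M) (\<Union>u\<in>{0..<t}. sets (F u))"
    and T_pos: "0 < T"
    and B_adapted: "\<And>t. t \<in> {0..T} \<Longrightarrow> B t \<in> borel_measurable (F t)"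
    and C_adapted: "\<And>t. t \<in> {0..T} \<Longrightarrow> C t \<in> borel_measurable (F t)"
    and B_cont: "\<And>\<omega>. \<omega> \<in> space M \<Longrightarrow> continuous_on {0..T} (\<lambda>t. B t \<omega>)"
    and C_cont: "\<And>\<omega>. \<omega> \<in> space M \<Longrightarrow> continuous_on {0..T} (\<lambda>t. C t \<omega>)"
    and B_nonneg: "\<And>t \<omega>. t \<in> {0..T} \<Longrightarrow> \<omega> \<in> space M \<Longrightarrow> 0 \<le> B t \<omega>"
    and C_bdd: "\<exists>K. \<forall>t\<in>{0..T}. \<forall>\<omega>\<in>space M. \<bar>C t \<omega>\<bar> \<le> K"
    and B_int: "(\<integral>\<^sup>+ \<omega>. (\<integral>\<^sup>+ u\<in>{0..T}. ennreal (B u \<omega>) \<partial>lborel) \<partial>M) < \<infinity>"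
    and t0: "t0 \<in> {0..T}"
    and hyp: "((\<lambda>t. integral\<^sup>L M (\<lambda>\<omega>. (intproc B C t \<omega> - intproc B C t0 \<omega>) / (t - t0)))
                \<longlongrightarrow> integral\<^sup>L M (\<lambda>\<omega>. B t0 \<omega> + C t0 \<omega>)) (at t0 within {0..T})"
  shows "L1_tendsto M
           (\<lambda>t \<omega>. real_cond_exp M (F t) (\<lambda>\<omega>'. intproc B C t0 \<omega>' - intproc B C t \<omega>') \<omega> / (t0 - t))
           (\<lambda>\<omega>. B t0 \<omega> + C t0 \<omega>) (at t0 within {0..<t0})
       \<and> L1_tendsto M
           (\<lambda>t \<omega>. real_cond_exp M (F t0) (\<lambda>\<omega>'. intproc B C t \<omega>' - intproc B C t0 \<omega>') \<omega> / (t - t0))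
           (\<lambda>\<omega>. B t0 \<omega> + C t0 \<omega>) (at t0 within {t0<..T})"
proof -
  interpret P: prob_space M by (rule prob)
  obtain K where K: "\<And>t \<omega>. t \<in> {0..T} \<Longrightarrow> \<omega> \<in> space M \<Longrightarrow> \<bar>C t \<omega>\<bar> \<le> K"
    using C_bdd by blast
  have K0: "0 \<le> K"
  proof -
    obtain \<omega> where "\<omega> \<in> space M" using P.not_empty by auto
    then show ?thesis using K[of 0 \<omega>] T_pos by force
  qed
  define A where "A = intproc B C"
  define Z where "Z u \<omega> = B u \<omega> + C u \<omega>" for u \<omega>
  define Y where "Y \<omega> = B t0 \<omega> + C t0 \<omega>" for \<omega>
  define Q where "Q t \<omega> = (A t \<omega> - A t0 \<omega>) / (t - t0)" for t \<omega>
  have sp: "\<And>t. 0 \<le> t \<Longrightarrow> space (F t) = space M" using filt_sub by (auto simp: subalgebra_def)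
  have sfs: "\<And>t. 0 \<le> t \<Longrightarrow> sigma_finite_subalgebra M (F t)"
  proof -
    fix t :: real assume "0 \<le> t"
    have "finite_measure_subalgebra M (F t)"
      unfolding finite_measure_subalgebra_def finite_measure_subalgebra_axioms_def
      using filt_sub[OF \<open>0 \<le> t\<close>] P.finite_measure_axioms by auto
    then show "sigma_finite_subalgebra M (F t)" by (rule finite_measure_subalgebra_is_sigma_finite)
  qed
  have Zcont: "\<And>\<omega>. \<omega> \<in> space M \<Longrightarrow> continuous_on {0..T} (\<lambda>u. Z u \<omega>)"
    unfolding Z_def using B_cont C_cont by (intro continuous_intros) auto
  have subF: "\<And>u s. 0 \<le> u \<Longrightarrow> u \<le> s \<Longrightarrow> subalgebra (F s) (F u)"
    using filt_mono sp unfolding subalgebra_def by auto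
  have BmF: "B u \<in> borel_measurable (F s)" if "u \<in> {0..T}" "u \<le> s" for u s
    using that by (intro measurable_from_subalg[OF subF B_adapted]) auto
  have CmF: "C u \<in> borel_measurable (F s)" if "u \<in> {0..T}" "u \<le> s" for u s
    using that by (intro measurable_from_subalg[OF subF C_adapted]) auto
  have ZmF: "Z u \<in> borel_measurable (F s)" if "u \<in> {0..T}" "u \<le> s" for u s
  proof -
    have "(\<lambda>\<omega>. B u \<omega> + C u \<omega>) \<in> borel_measurable (F s)"
      using BmF[OF that] CmF[OF that] by (rule borel_measurable_add)
    then show ?thesis unfolding Z_def .
  qed
  have Ameas: "\<And>t s. 0 \<le> t \<Longrightarrow> t \<le> s \<Longrightarrow> s \<le> T \<Longrightarrow> A t \<in> borel_measurable (F s)"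
  proof -
    fix t s :: real assume ts: "0 \<le> t" "t \<le> s" "s \<le> T"
    have "(\<lambda>\<omega>. LINT u:{0..t}|lborel. Z u \<omega>) \<in> borel_measurable (F s)"
    proof (rule lint_meas[where s = s])
      show "0 \<le> s" "t \<le> s" using ts by auto
      show "\<And>u. u \<in> {0..s} \<Longrightarrow> Z u \<in> borel_measurable (F s)" using ZmF ts by auto
      show "\<And>\<omega>. \<omega> \<in> space (F s) \<Longrightarrow> continuous_on {0..s} (\<lambda>u. Z u \<omega>)"
      proof -
        fix \<omega> assume "\<omega> \<in> space (F s)"
        then have "\<omega> \<in> space M" using sp[of s] ts by auto
        moreover have "{0..s} \<subseteq> {0..T}" using ts by auto
        ultimately show "continuous_on {0..s} (\<lambda>u. Z u \<omega>)" using Zcont continuous_on_subset by blast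
      qed
    qed
    then show "A t \<in> borel_measurable (F s)"
      unfolding A_def intproc_def[abs_def] Z_def by simp
  qed
  have AmeasM: "A t \<in> borel_measurable M" if "t \<in> {0..T}" for t
    using that T_pos by (intro measurable_from_subalg[OF filt_sub[of T] Ameas[of t T]]) auto
  have Aeq: "\<And>t \<omega>. t \<in> {0..T} \<Longrightarrow> \<omega> \<in> space M \<Longrightarrow> A t \<omega> = integral {0..t} (\<lambda>u. Z u \<omega>)"
    unfolding A_def intproc_def using lint_eq_integral(1)[OF Zcont] by (simp add: Z_def)
  have Zint: "\<And>t \<omega>. t \<in> {0..T} \<Longrightarrow> \<omega> \<in> space M \<Longrightarrow> (\<lambda>u. Z u \<omega>) integrable_on {0..t}"
    using lint_eq_integral(2)[OF Zcont] by simp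
  have Bint: "\<And>t \<omega>. t \<in> {0..T} \<Longrightarrow> \<omega> \<in> space M \<Longrightarrow> (\<lambda>u. B u \<omega>) integrable_on {0..t}"
    using lint_eq_integral(2)[OF B_cont] by simp
  define AB where "AB \<omega> = integral {0..T} (\<lambda>u. B u \<omega>)" for \<omega>
  have AB0: "\<And>\<omega>. \<omega> \<in> space M \<Longrightarrow> 0 \<le> AB \<omega>"
    unfolding AB_def using B_nonneg Bint T_pos by (intro integral_nonneg) auto
  have ABint: "integrable M AB"
  proof -
    have ABlint: "AB \<omega> = (LINT u:{0..T}|lborel. B u \<omega>)" if "\<omega> \<in> space M" for \<omega>
      unfolding AB_def using lint_eq_integral(1)[OF B_cont[OF that], of T] T_pos by simp
    have BmM: "B u \<in> borel_measurable M" if "u \<in> {0..T}" for u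
      using that by (intro measurable_from_subalg[OF filt_sub B_adapted]) auto
    have "(\<lambda>\<omega>. LINT u:{0..T}|lborel. B u \<omega>) \<in> borel_measurable M"
      by (rule lint_meas[where s = T]) (use T_pos BmM B_cont in auto)
    then have ABm: "AB \<in> borel_measurable M"
      using ABlint by (subst measurable_cong) auto
    have nn: "ennreal (AB \<omega>) = (\<integral>\<^sup>+ u\<in>{0..T}. ennreal (B u \<omega>) \<partial>lborel)" if w: "\<omega> \<in> space M" for \<omega>
    proof -
      have si: "set_integrable lborel {0..T} (\<lambda>u. B u \<omega>)"
        by (rule borel_integrable_atLeastAtMost'[OF B_cont[OF w]])
      have "ennreal (AB \<omega>) = ennreal (\<integral>u. indicator {0..T} u *\<^sub>R B u \<omega> \<partial>lborel)"
        using ABlint[OF w] unfolding set_lebesgue_integral_def by simp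
      also have "\<dots> = (\<integral>\<^sup>+ u. ennreal (indicator {0..T} u *\<^sub>R B u \<omega>) \<partial>lborel)"
      proof (rule nn_integral_eq_integral[symmetric])
        show "integrable lborel (\<lambda>u. indicator {0..T} u *\<^sub>R B u \<omega>)"
          using si unfolding set_integrable_def .
        show "AE u in lborel. 0 \<le> indicator {0..T} u *\<^sub>R B u \<omega>"
          using B_nonneg[OF _ w] by (intro AE_I2) (simp add: indicator_def)
      qed
      also have "\<dots> = (\<integral>\<^sup>+ u\<in>{0..T}. ennreal (B u \<omega>) \<partial>lborel)"
        by (rule nn_integral_cong) (simp add: indicator_def)
      finally show ?thesis .
    qed
    show ?thesis
    proof (rule integrableI_nonneg[OF ABm])
      show "AE x in M. 0 \<le> AB x" using AB0 by auto
      have "(\<integral>\<^sup>+ \<omega>. ennreal (AB \<omega>) \<partial>M) = (\<integral>\<^sup>+ \<omega>. (\<integral>\<^sup>+ u\<in>{0..T}. ennreal (B u \<omega>) \<partial>lborel) \<partial>M)"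
        by (rule nn_integral_cong) (rule nn)
      then show "(\<integral>\<^sup>+ \<omega>. ennreal (AB \<omega>) \<partial>M) < \<infinity>" using B_int by simp
    qed
  qed
  have Abound: "\<bar>A t \<omega>\<bar> \<le> AB \<omega> + T * K" if t: "t \<in> {0..T}" and w: "\<omega> \<in> space M" for t \<omega>
  proof -
    have sub: "{0..t} \<subseteq> {0..T}" using t by auto
    have Zlow: "-K \<le> Z u \<omega>" if "u \<in> {0..t}" for u
    proof -
      have u: "u \<in> {0..T}" using that sub by auto
      show ?thesis using K[OF u w] B_nonneg[OF u w] unfolding Z_def by linarith
    qed
    have Zup: "Z u \<omega> \<le> B u \<omega> + K" if "u \<in> {0..t}" for u
    proof -
      have u: "u \<in> {0..T}" using that sub by auto
      show ?thesis using K[OF u w] unfolding Z_def by linarith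
    qed
    have zi: "(\<lambda>u. Z u \<omega>) integrable_on {0..t}" using Zint[OF t w] .
    have bi: "(\<lambda>u. B u \<omega>) integrable_on {0..t}" using Bint[OF t w] .
    have bT: "(\<lambda>u. B u \<omega>) integrable_on {0..T}" using Bint[of T \<omega>] w T_pos by auto
    have i1: "integral {0..t} (\<lambda>u. - K) \<le> integral {0..t} (\<lambda>u. Z u \<omega>)"
      by (rule integral_le[OF integrable_const_ivl zi Zlow])
    have i2: "integral {0..t} (\<lambda>u. - K) = - (t * K)" using t by simp
    have lo: "- (t * K) \<le> A t \<omega>" using i1 i2 Aeq[OF t w] by linarith
    have "integral {0..t} (\<lambda>u. Z u \<omega>) \<le> integral {0..t} (\<lambda>u. B u \<omega> + K)"
      by (rule integral_le[OF zi integrable_add[OF bi integrable_const_ivl] Zup])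
    also have "\<dots> = integral {0..t} (\<lambda>u. B u \<omega>) + t * K"
      using t by (simp add: integral_add[OF bi integrable_const_ivl])
    also have "integral {0..t} (\<lambda>u. B u \<omega>) \<le> AB \<omega>"
      unfolding AB_def using B_nonneg[OF _ w] by (intro integral_subset_le[OF sub bi bT]) auto
    finally have up: "A t \<omega> \<le> AB \<omega> + t * K" using Aeq[OF t w] by simp
    have "t * K \<le> T * K" using t K0 by (intro mult_right_mono) auto
    then show ?thesis using lo up AB0[OF w] t K0 by (auto simp: abs_le_iff)
  qed
  have Aint: "\<And>t. t \<in> {0..T} \<Longrightarrow> integrable M (A t)"
  proof -
    fix t :: real assume t: "t \<in> {0..T}"
    show "integrable M (A t)"
    proof (rule Bochner_Integration.integrable_bound[of _ "\<lambda>\<omega>. AB \<omega> + T * K"])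
      show "integrable M (\<lambda>\<omega>. AB \<omega> + T * K)" using ABint by simp
      show "A t \<in> borel_measurable M" using AmeasM t by auto
      show "AE \<omega> in M. norm (A t \<omega>) \<le> norm (AB \<omega> + T * K)"
      proof (rule AE_I2)
        fix \<omega> assume w: "\<omega> \<in> space M"
        have "\<bar>A t \<omega>\<bar> \<le> AB \<omega> + T * K" using Abound t w by blast
        also have "\<dots> \<le> \<bar>AB \<omega> + T * K\<bar>" by (rule abs_ge_self)
        finally show "norm (A t \<omega>) \<le> norm (AB \<omega> + T * K)" by simp
      qed
    qed
  qed
  have Qint: "\<And>t. t \<in> {0..T} \<Longrightarrow> integrable M (Q t)"
  proof -
    fix t :: real assume "t \<in> {0..T}"
    then have "integrable M (\<lambda>\<omega>. A t \<omega> - A t0 \<omega>)" using Aint t0 by (intro Bochner_Integration.integrable_diff)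
    then show "integrable M (Q t)" unfolding Q_def by (rule integrable_divide)
  qed
  have Qlow: "0 \<le> Q t \<omega> + K" if t: "t \<in> {0..T}" and tt0: "t \<noteq> t0" and w: "\<omega> \<in> space M" for t \<omega>
  proof -
    define G where "G r = integral {0..r} (\<lambda>u. Z u \<omega> + K)" for r
    have Geq: "G r = A r \<omega> + r * K" if r: "r \<in> {0..T}" for r
      unfolding G_def using r Aeq[OF r w] by (simp add: integral_add[OF Zint[OF r w] integrable_const_ivl])
    have Gmono: "G a \<le> G b" if a: "a \<in> {0..T}" and b: "b \<in> {0..T}" and ab: "a \<le> b" for a b
      unfolding G_def
    proof (rule integral_subset_le)
      show "{0..a} \<subseteq> {0..b}" using ab by auto
      show "(\<lambda>u. Z u \<omega> + K) integrable_on {0..a}" by (rule integrable_add[OF Zint[OF a w] integrable_const_ivl])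
      show "(\<lambda>u. Z u \<omega> + K) integrable_on {0..b}" by (rule integrable_add[OF Zint[OF b w] integrable_const_ivl])
      show "\<forall>u\<in>{0..b}. 0 \<le> Z u \<omega> + K"
      proof
        fix u assume "u \<in> {0..b}"
        then have u: "u \<in> {0..T}" using b by auto
        show "0 \<le> Z u \<omega> + K" using K[OF u w] B_nonneg[OF u w] unfolding Z_def by linarith
      qed
    qed
    have "Q t \<omega> + K = (G t - G t0) / (t - t0)"
      unfolding Q_def Geq[OF t] Geq[OF t0] using tt0 by (simp add: field_simps)
    also have "0 \<le> (G t - G t0) / (t - t0)"
    proof (cases "t0 < t")
      case True
      then show ?thesis using Gmono[OF t0 t] by (intro divide_nonneg_pos) auto
    next
      case False
      then have "t < t0" using tt0 by auto
      then show ?thesis using Gmono[OF t t0] by (intro divide_nonpos_neg) auto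
    qed
    finally show ?thesis by simp
  qed
  have Qlim: "((\<lambda>t. Q t \<omega>) \<longlongrightarrow> Y \<omega>) (at t0 within {0..T})" if w: "\<omega> \<in> space M" for \<omega>
  proof -
    have "((\<lambda>u. integral {0..u} (\<lambda>v. Z v \<omega>)) has_vector_derivative Z t0 \<omega>) (at t0 within {0..T})"
      by (rule integral_has_vector_derivative[OF Zcont[OF w] t0])
    then have "((\<lambda>u. integral {0..u} (\<lambda>v. Z v \<omega>)) has_field_derivative Z t0 \<omega>) (at t0 within {0..T})"
      by (simp add: has_real_derivative_iff_has_vector_derivative)
    then have lim: "((\<lambda>y. (integral {0..y} (\<lambda>v. Z v \<omega>) - integral {0..t0} (\<lambda>v. Z v \<omega>)) / (y - t0)) \<longlongrightarrow> Z t0 \<omega>)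
        (at t0 within {0..T})"
      by (simp add: has_field_derivative_iff)
    have ev: "eventually (\<lambda>y. (integral {0..y} (\<lambda>v. Z v \<omega>) - integral {0..t0} (\<lambda>v. Z v \<omega>)) / (y - t0) = Q y \<omega>)
        (at t0 within {0..T})"
      unfolding eventually_at_filter
      by (rule always_eventually) (auto simp: Q_def Aeq[OF _ w] t0 simp del: atLeastAtMost_iff)
    have "Y \<omega> = Z t0 \<omega>" by (simp add: Y_def Z_def)
    then show ?thesis using tendsto_cong[OF ev] lim by simp
  qed
  have YmF: "Y \<in> borel_measurable (F t0)"
  proof -
    have "(\<lambda>\<omega>. B t0 \<omega> + C t0 \<omega>) \<in> borel_measurable (F t0)"
      using BmF[OF t0 order_refl] CmF[OF t0 order_refl] by (rule borel_measurable_add)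
    then show ?thesis unfolding Y_def .
  qed
  have YmM: "Y \<in> borel_measurable M"
    using t0 by (intro measurable_from_subalg[OF filt_sub YmF]) auto
  have EQ: "((\<lambda>t. \<integral>\<omega>. Q t \<omega> \<partial>M) \<longlongrightarrow> (\<integral>\<omega>. Y \<omega> \<partial>M)) (at t0 within {0..T})"
    using hyp unfolding Q_def A_def Y_def .
  define Gs where "Gs Xs n \<omega> = Q (Xs n) \<omega> + K" for Xs :: "nat \<Rightarrow> real" and n \<omega>
  have Ga: "integrable M (Gs Xs n)" if "\<forall>n. Xs n \<in> {0..T} - {t0}" for Xs n
  proof -
    have "integrable M (\<lambda>\<omega>. Q (Xs n) \<omega> + K)"
      using Qint[of "Xs n"] that by (intro Bochner_Integration.integrable_add P.integrable_const) auto
    then show ?thesis unfolding Gs_def .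
  qed
  have Gb: "0 \<le> Gs Xs n \<omega>" if "\<forall>n. Xs n \<in> {0..T} - {t0}" "\<omega> \<in> space M" for Xs n \<omega>
    unfolding Gs_def using Qlow[of "Xs n" \<omega>] that by auto
  have Gc: "(\<lambda>n. Gs Xs n \<omega>) \<longlonglongrightarrow> Y \<omega> + K"
    if "\<forall>n. Xs n \<in> {0..T} - {t0}" "Xs \<longlonglongrightarrow> t0" "\<omega> \<in> space M" for Xs \<omega>
  proof -
    have "((\<lambda>t. Q t \<omega>) \<circ> Xs) \<longlonglongrightarrow> Y \<omega>"
      using Qlim[OF that(3)] that(1,2) unfolding tendsto_at_iff_sequentially by blast
    then show ?thesis unfolding Gs_def by (intro tendsto_add) (auto simp: o_def)
  qed
  have intG: "(\<integral>\<omega>. Gs Xs n \<omega> \<partial>M) = (\<integral>\<omega>. Q (Xs n) \<omega> \<partial>M) + K"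
    if "\<forall>n. Xs n \<in> {0..T} - {t0}" for Xs n
  proof -
    have "(\<integral>\<omega>. Gs Xs n \<omega> \<partial>M) = (\<integral>\<omega>. Q (Xs n) \<omega> \<partial>M) + (\<integral>\<omega>. K \<partial>M)"
      unfolding Gs_def using Qint[of "Xs n"] that
      by (intro Bochner_Integration.integral_add P.integrable_const) auto
    then show ?thesis by (simp add: P.prob_space)
  qed
  have Gd: "(\<lambda>n. \<integral>\<omega>. Gs Xs n \<omega> \<partial>M) \<longlonglongrightarrow> (\<integral>\<omega>. Y \<omega> \<partial>M) + K"
    if "\<forall>n. Xs n \<in> {0..T} - {t0}" "Xs \<longlonglongrightarrow> t0" for Xs
  proof -
    have "((\<lambda>t. \<integral>\<omega>. Q t \<omega> \<partial>M) \<circ> Xs) \<longlonglongrightarrow> (\<integral>\<omega>. Y \<omega> \<partial>M)"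
      using EQ that unfolding tendsto_at_iff_sequentially by blast
    then show ?thesis unfolding intG[OF that(1)] by (intro tendsto_add) (auto simp: o_def)
  qed
  have Ygm: "(\<lambda>\<omega>. Y \<omega> + K) \<in> borel_measurable M" using YmM by simp
  have Ygp: "0 \<le> Y \<omega> + K" if "\<omega> \<in> space M" for \<omega>
    using K[OF t0 that] B_nonneg[OF t0 that] unfolding Y_def by linarith
  have Yint: "integrable M Y"
  proof -
    have "t0 islimpt {0..T}" using islimpt_Icc[OF T_pos] t0 by simp
    then obtain Xs where Xs: "\<forall>n. Xs n \<in> {0..T} - {t0}" "Xs \<longlonglongrightarrow> t0"
      unfolding islimpt_sequential by blast
    have "integrable M (\<lambda>\<omega>. Y \<omega> + K)"
      by (rule fatou_int[OF Ga[OF Xs(1)] Gb[OF Xs(1)] Ygm Ygp Gc[OF Xs] Gd[OF Xs]])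
    then have "integrable M (\<lambda>\<omega>. (Y \<omega> + K) - K)"
      by (intro Bochner_Integration.integrable_diff P.integrable_const)
    then show ?thesis by simp
  qed
  have L1: "((\<lambda>t. \<integral>\<^sup>+\<omega>. ennreal \<bar>Q t \<omega> - Y \<omega>\<bar> \<partial>M) \<longlongrightarrow> 0) (at t0 within {0..T})"
    unfolding tendsto_at_iff_sequentially
  proof (intro allI impI)
    fix Xs :: "nat \<Rightarrow> real" assume Xs1: "\<forall>n. Xs n \<in> {0..T} - {t0}" and Xs2: "Xs \<longlonglongrightarrow> t0"
    have YKi: "integrable M (\<lambda>\<omega>. Y \<omega> + K)" using Yint by (intro Bochner_Integration.integrable_add P.integrable_const)
    have "(\<integral>\<omega>. Y \<omega> + K \<partial>M) = (\<integral>\<omega>. Y \<omega> \<partial>M) + K"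
      using Yint by (simp add: Bochner_Integration.integral_add P.integrable_const P.prob_space)
    then have "(\<lambda>n. \<integral>\<^sup>+\<omega>. ennreal \<bar>Gs Xs n \<omega> - (Y \<omega> + K)\<bar> \<partial>M) \<longlonglongrightarrow> 0"
      using Gd[OF Xs1 Xs2] by (intro scheffe_int[OF Ga[OF Xs1] Gb[OF Xs1] YKi Ygp Gc[OF Xs1 Xs2]]) auto
    then show "((\<lambda>t. \<integral>\<^sup>+\<omega>. ennreal \<bar>Q t \<omega> - Y \<omega>\<bar> \<partial>M) \<circ> Xs) \<longlonglongrightarrow> 0"
      by (simp add: Gs_def o_def)
  qed
  have Yeq: "(\<lambda>\<omega>. B t0 \<omega> + C t0 \<omega>) = Y" by (rule ext) (simp add: Y_def)
  have Qeq: "(\<lambda>\<omega>. (A t \<omega> - A t0 \<omega>) / (t - t0)) = Q t" for t by (rule ext) (simp add: Q_def)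
  have Qeq2: "(\<lambda>\<omega>. (A t0 \<omega> - A t \<omega>) / (t0 - t)) = Q t" for t
    by (rule ext) (simp add: Q_def swap_div)
  have QmM: "Q t \<in> borel_measurable M" if "t \<in> {0..T}" for t using Qint[OF that] by auto
  have RIGHT: "L1_tendsto M
           (\<lambda>t \<omega>. real_cond_exp M (F t0) (\<lambda>\<omega>'. A t \<omega>' - A t0 \<omega>') \<omega> / (t - t0)) Y (at t0 within {t0<..T})"
    unfolding L1_tendsto_def
  proof (intro conjI)
    have ev: "eventually (\<lambda>t. t \<in> {t0<..T}) (at t0 within {t0<..T})"
      by (simp add: eventually_at_filter)
    interpret S: sigma_finite_subalgebra M "F t0" using sfs t0 by auto
    show "eventually (\<lambda>t. integrable M (\<lambda>\<omega>. real_cond_exp M (F t0) (\<lambda>\<omega>'. A t \<omega>' - A t0 \<omega>') \<omega> / (t - t0)))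
        (at t0 within {t0<..T})"
      using ev
    proof eventually_elim
      case (elim t)
      then have t: "t \<in> {0..T}" using t0 by auto
      have "integrable M (\<lambda>\<omega>'. A t \<omega>' - A t0 \<omega>')"
        using Aint[OF t] Aint[OF t0] by (rule Bochner_Integration.integrable_diff)
      then show ?case by (intro integrable_divide S.real_cond_exp_int(1))
    qed
    show "integrable M Y" by (rule Yint)
    show "((\<lambda>t. \<integral>\<^sup>+\<omega>. ennreal \<bar>real_cond_exp M (F t0) (\<lambda>\<omega>'. A t \<omega>' - A t0 \<omega>') \<omega> / (t - t0) - Y \<omega>\<bar> \<partial>M)
        \<longlongrightarrow> 0) (at t0 within {t0<..T})"
    proof (rule tendsto_sandwich[where f="\<lambda>_. 0" and h="\<lambda>t. \<integral>\<^sup>+\<omega>. ennreal \<bar>Q t \<omega> - Y \<omega>\<bar> \<partial>M"])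
      show "eventually (\<lambda>t. 0 \<le> (\<integral>\<^sup>+\<omega>. ennreal \<bar>real_cond_exp M (F t0) (\<lambda>\<omega>'. A t \<omega>' - A t0 \<omega>') \<omega> / (t - t0) - Y \<omega>\<bar> \<partial>M))
          (at t0 within {t0<..T})" by simp
      show "eventually (\<lambda>t. (\<integral>\<^sup>+\<omega>. ennreal \<bar>real_cond_exp M (F t0) (\<lambda>\<omega>'. A t \<omega>' - A t0 \<omega>') \<omega> / (t - t0) - Y \<omega>\<bar> \<partial>M)
          \<le> (\<integral>\<^sup>+\<omega>. ennreal \<bar>Q t \<omega> - Y \<omega>\<bar> \<partial>M)) (at t0 within {t0<..T})"
        using ev
      proof eventually_elim
        case (elim t)
        then have t: "t \<in> {0..T}" using t0 by auto
        have di: "integrable M (\<lambda>\<omega>'. A t \<omega>' - A t0 \<omega>')"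
          using Aint[OF t] Aint[OF t0] by (rule Bochner_Integration.integrable_diff)
        have a1: "AE \<omega> in M. real_cond_exp M (F t0) (Q t) \<omega> = real_cond_exp M (F t0) (\<lambda>\<omega>'. A t \<omega>' - A t0 \<omega>') \<omega> / (t - t0)"
          using S.real_cond_exp_cdiv[OF di, of "t - t0"] unfolding Qeq .
        have a2: "AE \<omega> in M. real_cond_exp M (F t0) (\<lambda>\<omega>. Q t \<omega> - Y \<omega>) \<omega> = real_cond_exp M (F t0) (Q t) \<omega> - real_cond_exp M (F t0) Y \<omega>"
          by (rule S.real_cond_exp_diff[OF Qint[OF t] Yint])
        have a3: "AE \<omega> in M. real_cond_exp M (F t0) Y \<omega> = Y \<omega>"
          by (rule S.real_cond_exp_F_meas[OF Yint YmF])
        have AE: "AE \<omega> in M. real_cond_exp M (F t0) (\<lambda>\<omega>'. A t \<omega>' - A t0 \<omega>') \<omega> / (t - t0) - Y \<omega>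
            = real_cond_exp M (F t0) (\<lambda>\<omega>. Q t \<omega> - Y \<omega>) \<omega>"
          using a1 a2 a3 by auto
        have "(\<integral>\<^sup>+\<omega>. ennreal \<bar>real_cond_exp M (F t0) (\<lambda>\<omega>'. A t \<omega>' - A t0 \<omega>') \<omega> / (t - t0) - Y \<omega>\<bar> \<partial>M)
            = (\<integral>\<^sup>+\<omega>. ennreal \<bar>real_cond_exp M (F t0) (\<lambda>\<omega>. Q t \<omega> - Y \<omega>) \<omega>\<bar> \<partial>M)"
          by (rule nn_integral_cong_AE) (use AE in auto)
        also have "\<dots> \<le> (\<integral>\<^sup>+\<omega>. ennreal \<bar>Q t \<omega> - Y \<omega>\<bar> \<partial>M)"
          by (rule S.cexp_contr) (use QmM[OF t] YmM in auto)
        finally show ?case .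
      qed
      show "((\<lambda>_. 0::ennreal) \<longlongrightarrow> 0) (at t0 within {t0<..T})" by simp
      show "((\<lambda>t. \<integral>\<^sup>+\<omega>. ennreal \<bar>Q t \<omega> - Y \<omega>\<bar> \<partial>M) \<longlongrightarrow> 0) (at t0 within {t0<..T})"
        by (rule tendsto_within_subset[OF L1]) (use t0 in auto)
    qed
  qed
  have LEFT: "L1_tendsto M
           (\<lambda>t \<omega>. real_cond_exp M (F t) (\<lambda>\<omega>'. A t0 \<omega>' - A t \<omega>') \<omega> / (t0 - t)) Y (at t0 within {0..<t0})"
    unfolding L1_tendsto_def
  proof (intro conjI)
    have evL: "eventually (\<lambda>t. t0 / 2 < t \<and> 0 \<le> t \<and> t < t0) (at t0 within {0..<t0})"
    proof (cases "t0 = 0")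
      case True
      then show ?thesis by simp
    next
      case False
      then have "0 < t0" using t0 by auto
      then show ?thesis unfolding eventually_at by (intro exI[of _ "t0/2"]) (auto simp: dist_real_def)
    qed
    show "eventually (\<lambda>t. integrable M (\<lambda>\<omega>. real_cond_exp M (F t) (\<lambda>\<omega>'. A t0 \<omega>' - A t \<omega>') \<omega> / (t0 - t)))
        (at t0 within {0..<t0})"
      using evL
    proof eventually_elim
      case (elim t)
      then have t: "t \<in> {0..T}" using t0 by auto
      interpret S: sigma_finite_subalgebra M "F t" using sfs elim by auto
      have "integrable M (\<lambda>\<omega>'. A t0 \<omega>' - A t \<omega>')"
        using Aint[OF t0] Aint[OF t] by (rule Bochner_Integration.integrable_diff)
      then show ?case by (intro integrable_divide S.real_cond_exp_int(1))
    qed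
    show "integrable M Y" by (rule Yint)
    define e where "e t = (\<integral>\<^sup>+\<omega>. ennreal \<bar>Q t \<omega> - Y \<omega>\<bar> \<partial>M)" for t
    show "((\<lambda>t. \<integral>\<^sup>+\<omega>. ennreal \<bar>real_cond_exp M (F t) (\<lambda>\<omega>'. A t0 \<omega>' - A t \<omega>') \<omega> / (t0 - t) - Y \<omega>\<bar> \<partial>M)
        \<longlongrightarrow> 0) (at t0 within {0..<t0})"
    proof (rule tendsto_sandwich[where f="\<lambda>_. 0" and h="\<lambda>t. 3 * e t + 4 * e (2 * t - t0)"])
      show "eventually (\<lambda>t. 0 \<le> (\<integral>\<^sup>+\<omega>. ennreal \<bar>real_cond_exp M (F t) (\<lambda>\<omega>'. A t0 \<omega>' - A t \<omega>') \<omega> / (t0 - t) - Y \<omega>\<bar> \<partial>M))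
          (at t0 within {0..<t0})" by simp
      show "eventually (\<lambda>t. (\<integral>\<^sup>+\<omega>. ennreal \<bar>real_cond_exp M (F t) (\<lambda>\<omega>'. A t0 \<omega>' - A t \<omega>') \<omega> / (t0 - t) - Y \<omega>\<bar> \<partial>M)
          \<le> 3 * e t + 4 * e (2 * t - t0)) (at t0 within {0..<t0})"
        using evL
      proof eventually_elim
        case (elim t)
        define t' where "t' = 2 * t - t0"
        have t: "t \<in> {0..T}" and t': "t' \<in> {0..T}" and tt': "t' \<le> t" and tt0: "t \<noteq> t0" and t't0: "t' \<noteq> t0"
          using elim t0 by (auto simp: t'_def)
        interpret S: sigma_finite_subalgebra M "F t" using sfs elim by auto
        define D where "D \<omega> = (A t \<omega> - A t' \<omega>) / (t0 - t)" for \<omega>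
        have [measurable]: "A t \<in> borel_measurable (F t)" "A t' \<in> borel_measurable (F t)"
          using t t' tt' by (auto intro!: Ameas)
        have DmF[measurable]: "D \<in> borel_measurable (F t)" unfolding D_def by measurable
        have DmM[measurable]: "D \<in> borel_measurable M" by (rule measurable_from_subalg[OF filt_sub DmF]) (use t in auto)
        have [measurable]: "Q t \<in> borel_measurable M" "Q t' \<in> borel_measurable M" "Y \<in> borel_measurable M"
          using QmM[OF t] QmM[OF t'] YmM by auto
        have Dint: "integrable M D"
          unfolding D_def using Aint[OF t] Aint[OF t'] by (intro integrable_divide Bochner_Integration.integrable_diff)
        have Dpt: "D \<omega> = 2 * Q t' \<omega> - Q t \<omega>" for \<omega>
        proof -
          have e: "t' - t0 = 2 * (t - t0)" by (simp add: t'_def)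
          have "Q t' \<omega> = (A t' \<omega> - A t0 \<omega>) / (2 * (t - t0))" unfolding Q_def e ..
          then have q1: "2 * Q t' \<omega> = (A t' \<omega> - A t0 \<omega>) / (t - t0)" by (simp only: two_div)
          have d1: "D \<omega> = (A t' \<omega> - A t \<omega>) / (t - t0)" unfolding D_def by (rule swap_div)
          show ?thesis unfolding d1 q1 by (simp add: Q_def diff_divide_distrib)
        qed
        have di: "integrable M (\<lambda>\<omega>'. A t0 \<omega>' - A t \<omega>')"
          using Aint[OF t0] Aint[OF t] by (rule Bochner_Integration.integrable_diff)
        have b1: "AE \<omega> in M. real_cond_exp M (F t) (Q t) \<omega> = real_cond_exp M (F t) (\<lambda>\<omega>'. A t0 \<omega>' - A t \<omega>') \<omega> / (t0 - t)"
          using S.real_cond_exp_cdiv[OF di, of "t0 - t"] unfolding Qeq2 .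
        have b2: "AE \<omega> in M. real_cond_exp M (F t) (\<lambda>\<omega>. Q t \<omega> - D \<omega>) \<omega> = real_cond_exp M (F t) (Q t) \<omega> - real_cond_exp M (F t) D \<omega>"
          by (rule S.real_cond_exp_diff[OF Qint[OF t] Dint])
        have b3: "AE \<omega> in M. real_cond_exp M (F t) D \<omega> = D \<omega>"
          by (rule S.real_cond_exp_F_meas[OF Dint DmF])
        have AE: "AE \<omega> in M. real_cond_exp M (F t) (\<lambda>\<omega>'. A t0 \<omega>' - A t \<omega>') \<omega> / (t0 - t) - Y \<omega>
            = real_cond_exp M (F t) (\<lambda>\<omega>. Q t \<omega> - D \<omega>) \<omega> + (D \<omega> - Y \<omega>)"
          using b1 b2 b3 by auto
        have "(\<integral>\<^sup>+\<omega>. ennreal \<bar>real_cond_exp M (F t) (\<lambda>\<omega>'. A t0 \<omega>' - A t \<omega>') \<omega> / (t0 - t) - Y \<omega>\<bar> \<partial>M)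
            \<le> (\<integral>\<^sup>+\<omega>. ennreal \<bar>real_cond_exp M (F t) (\<lambda>\<omega>. Q t \<omega> - D \<omega>) \<omega>\<bar> + ennreal \<bar>D \<omega> - Y \<omega>\<bar> \<partial>M)"
        proof (rule nn_integral_mono_AE)
          show "AE \<omega> in M. ennreal \<bar>real_cond_exp M (F t) (\<lambda>\<omega>'. A t0 \<omega>' - A t \<omega>') \<omega> / (t0 - t) - Y \<omega>\<bar>
              \<le> ennreal \<bar>real_cond_exp M (F t) (\<lambda>\<omega>. Q t \<omega> - D \<omega>) \<omega>\<bar> + ennreal \<bar>D \<omega> - Y \<omega>\<bar>"
            using AE
          proof eventually_elim
            case (elim \<omega>)
            then show ?case by (simp add: ennreal_plus[symmetric] del: ennreal_plus)
          qed
        qed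
        also have "\<dots> = (\<integral>\<^sup>+\<omega>. ennreal \<bar>real_cond_exp M (F t) (\<lambda>\<omega>. Q t \<omega> - D \<omega>) \<omega>\<bar> \<partial>M)
            + (\<integral>\<^sup>+\<omega>. ennreal \<bar>D \<omega> - Y \<omega>\<bar> \<partial>M)"
          by (rule nn_integral_add) auto
        also have "\<dots> \<le> (\<integral>\<^sup>+\<omega>. ennreal \<bar>Q t \<omega> - D \<omega>\<bar> \<partial>M) + (\<integral>\<^sup>+\<omega>. ennreal \<bar>D \<omega> - Y \<omega>\<bar> \<partial>M)"
          by (intro add_right_mono S.cexp_contr) auto
        also have "\<dots> = (\<integral>\<^sup>+\<omega>. ennreal \<bar>Q t \<omega> - D \<omega>\<bar> + ennreal \<bar>D \<omega> - Y \<omega>\<bar> \<partial>M)"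
          by (rule nn_integral_add[symmetric]) auto
        also have "\<dots> \<le> (\<integral>\<^sup>+\<omega>. 3 * ennreal \<bar>Q t \<omega> - Y \<omega>\<bar> + 4 * ennreal \<bar>Q t' \<omega> - Y \<omega>\<bar> \<partial>M)"
          by (intro nn_integral_mono ennreal_aux) (simp only: Dpt abs_aux)
        also have "\<dots> = 3 * e t + 4 * e t'"
          unfolding e_def by (simp add: nn_integral_add nn_integral_cmult)
        finally show ?case unfolding t'_def .
      qed
      show "((\<lambda>_. 0::ennreal) \<longlongrightarrow> 0) (at t0 within {0..<t0})" by simp
      have e1: "(e \<longlongrightarrow> 0) (at t0 within {0..<t0})"
        unfolding e_def by (rule tendsto_within_subset[OF L1]) (use t0 in auto)
      have fl: "filterlim (\<lambda>t. 2 * t - t0) (at t0 within {0..T}) (at t0 within {0..<t0})"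
        unfolding filterlim_at
      proof
        show "eventually (\<lambda>t. 2 * t - t0 \<in> {0..T} \<and> 2 * t - t0 \<noteq> t0) (at t0 within {0..<t0})"
          using evL by eventually_elim (use t0 in auto)
        have "((\<lambda>t. 2 * t - t0) \<longlongrightarrow> 2 * t0 - t0) (at t0 within {0..<t0})" by (intro tendsto_intros)
        then show "((\<lambda>t. 2 * t - t0) \<longlongrightarrow> t0) (at t0 within {0..<t0})" by simp
      qed
      have e2: "((\<lambda>t. e (2 * t - t0)) \<longlongrightarrow> 0) (at t0 within {0..<t0})"
        using filterlim_compose[OF L1 fl] unfolding e_def .
      have "((\<lambda>t. 3 * e t + 4 * e (2 * t - t0)) \<longlongrightarrow> 3 * 0 + 4 * 0) (at t0 within {0..<t0})"
        by (intro tendsto_add ennreal_tendsto_cmult e1 e2) auto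
      then show "((\<lambda>t. 3 * e t + 4 * e (2 * t - t0)) \<longlongrightarrow> 0) (at t0 within {0..<t0})" by simp
    qed
  qed
  show ?thesis using LEFT RIGHT unfolding A_def Yeq by blast

qed

end
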